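(* Let $X \subset \mathbb{R}^{2n}$ be a centrally symmetric (about the origin) strictly convex body with $C^2$-smooth boundary, and let $T$ be its symplectic outer billiard map. Suppose that for every $x\in\partial X$ there exists a point $z\in\mathbb{R}^{2n}\setminus X$ with $T^4z=z$, $T^2z=-z$ (so the orbit $\{z,Tz,T^2z,T^3z\}$ is a centrally symmetric $4$-periodic orbit) and $x=(z+Tz)/2$. Then $X=\alpha X^\omega$ for some $\alpha>0$; consequently $\alpha^{-1/2}X$ is symplectically self-polar.
   Context: $\mathbb{R}^{2n}\cong\mathbb{C}^n$, $J$ is multiplication by $\sqrt{-1}$, $\omega(u,v)=\langle Ju,v\rangle$. For a convex body $X$ with origin in its interior, $X^\omega=\{y: \omega(x,y)\le 1\ \forall x\in X\}$; $X$ is symplectically self-polar if $X=X^\omega$. The characteristic line of $\partial X$ at $x$ is $\ker(\omega|_{T_x\partial X})$. Symplectic outer billiard map: for a strictly convex body $X$ with $C^1$ boundary and $z\in\mathbb{R}^{2n}\setminus X$, there is a unique $x\in\partial X$ such that the line through $z$ and $x$ is the characteristic line of $\partial X$ at $x$ and $\omega(x,x-z)>0$; then $T(z)=2x-z$. *)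

theory Defs
  imports "HOL-Analysis.Analysis"
begin

text \<open>We model R^{2n} as C^n = complex ^ 'n (real inner product
  x \<bullet> y = sum_i Re (x_i * cnj y_i)); J is multiplication by i.\<close>

definition cJ :: "complex ^ 'n \<Rightarrow> complex ^ 'n" where
  "cJ u = (\<chi> i. \<i> * u $ i)"

definition omega :: "complex ^ 'n \<Rightarrow> complex ^ 'n \<Rightarrow> real" where
  "omega u v = cJ u \<bullet> v"

definition symp_polar :: "(complex ^ 'n) set \<Rightarrow> (complex ^ 'n) set" where
  "symp_polar X = {y. \<forall>x\<in>X. omega x y \<le> 1}"

definition symp_self_polar :: "(complex ^ 'n) set \<Rightarrow> bool" where
  "symp_self_polar X \<longleftrightarrow> X = symp_polar X"

definition convex_body :: "'a::euclidean_space set \<Rightarrow> bool" where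
  "convex_body X \<longleftrightarrow> compact X \<and> convex X \<and> interior X \<noteq> {}"

definition strictly_convex :: "'a::euclidean_space set \<Rightarrow> bool" where
  "strictly_convex X \<longleftrightarrow>
     (\<forall>x\<in>X. \<forall>y\<in>X. x \<noteq> y \<longrightarrow> (\<forall>t::real. 0 < t \<and> t < 1 \<longrightarrow> (1 - t) *\<^sub>R x + t *\<^sub>R y \<in> interior X))"

definition centrally_symmetric :: "'a::real_vector set \<Rightarrow> bool" where
  "centrally_symmetric X \<longleftrightarrow> (\<forall>x\<in>X. - x \<in> X)"

text \<open>C^2-smooth boundary: near each boundary point p, X is the sublevel set
  {f \<le> 0} of a C^2 function f with nonvanishing gradient at p.
  g is the gradient of f, g' the derivative of g.\<close>
definition C2_boundary :: "'a::euclidean_space set \<Rightarrow> bool" where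
  "C2_boundary X \<longleftrightarrow>
     (\<forall>p\<in>frontier X. \<exists>U (f::'a \<Rightarrow> real) (g::'a \<Rightarrow> 'a) (g'::'a \<Rightarrow> 'a \<Rightarrow> 'a).
        open U \<and> p \<in> U \<and>
        (\<forall>x\<in>U. (f has_derivative (\<lambda>h. g x \<bullet> h)) (at x)) \<and>
        (\<forall>x\<in>U. (g has_derivative g' x) (at x)) \<and>
        (\<forall>h. continuous_on U (\<lambda>x. g' x h)) \<and>
        g p \<noteq> 0 \<and>
        X \<inter> U = {x\<in>U. f x \<le> 0})"

definition tangent_space :: "'a::real_normed_vector set \<Rightarrow> 'a \<Rightarrow> 'a set" where
  "tangent_space S x = {v. \<exists>(\<gamma>::real \<Rightarrow> 'a) e. e > 0 \<and> \<gamma> 0 = x \<and>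
       (\<forall>t. \<bar>t\<bar> < e \<longrightarrow> \<gamma> t \<in> S) \<and> (\<gamma> has_vector_derivative v) (at 0)}"

definition char_dirs :: "(complex ^ 'n) set \<Rightarrow> complex ^ 'n \<Rightarrow> (complex ^ 'n) set" where
  "char_dirs X x = {u \<in> tangent_space (frontier X) x.
      \<forall>v \<in> tangent_space (frontier X) x. omega u v = 0}"

definition char_line :: "(complex ^ 'n) set \<Rightarrow> complex ^ 'n \<Rightarrow> (complex ^ 'n) set" where
  "char_line X x = {x + u | u. u \<in> char_dirs X x}"

definition ob_point :: "(complex ^ 'n) set \<Rightarrow> complex ^ 'n \<Rightarrow> complex ^ 'n" where
  "ob_point X z = (THE x. x \<in> frontier X \<and> z \<noteq> x \<and>
       {x + t *\<^sub>R (z - x) | t. True} = char_line X x \<and> omega x (x - z) > 0)"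

definition outer_billiard :: "(complex ^ 'n) set \<Rightarrow> complex ^ 'n \<Rightarrow> complex ^ 'n" where
  "outer_billiard X z = 2 *\<^sub>R ob_point X z - z"

end

theory Submission
  imports Defs
begin


lemma cJ_add: "cJ (u + v) = cJ u + cJ v"
  by (simp add: cJ_def vec_eq_iff algebra_simps)
lemma cJ_scaleR: "cJ (c *\<^sub>R u) = c *\<^sub>R cJ u"
  by (simp add: cJ_def vec_eq_iff scaleR_conv_of_real algebra_simps)
lemma cJ_minus: "cJ (- u) = - cJ u"
  by (simp add: cJ_def vec_eq_iff)
lemma cJ_diff: "cJ (u - v) = cJ u - cJ v"
  by (simp add: cJ_def vec_eq_iff algebra_simps)
lemma cJ_cJ: "cJ (cJ u) = - u"
  by (simp add: cJ_def vec_eq_iff)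
lemma cJ_0: "cJ 0 = 0"
  by (simp add: cJ_def vec_eq_iff)
lemma inner_cJ: "cJ u \<bullet> v = - (u \<bullet> cJ v)"
  by (simp add: cJ_def inner_vec_def inner_complex_def sum_negf[symmetric] algebra_simps)
lemma cJ_self: "cJ u \<bullet> u = 0"
  by (simp add: cJ_def inner_vec_def inner_complex_def algebra_simps)
lemma norm_cJ: "norm (cJ u) = norm u"
proof -
  have "cJ u \<bullet> cJ u = u \<bullet> u"
    by (simp add: cJ_def inner_vec_def inner_complex_def algebra_simps)
  thus ?thesis by (simp add: norm_eq_sqrt_inner)
qed
lemma cJ_eq_0: "cJ u = 0 \<longleftrightarrow> u = 0"
  using norm_cJ[of u] by (metis norm_eq_zero)

lemma omega_antisym: "omega x y = - omega y x"
  unfolding omega_def by (metis inner_cJ inner_commute)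
lemma omega_self: "omega x x = 0"
  unfolding omega_def by (rule cJ_self)
lemma omega_add1: "omega (a + b) c = omega a c + omega b c"
  by (simp add: omega_def cJ_add inner_add_left)
lemma omega_add2: "omega c (a + b) = omega c a + omega c b"
  by (simp add: omega_def inner_add_right)
lemma omega_diff1: "omega (a - b) c = omega a c - omega b c"
  by (simp add: omega_def cJ_diff inner_diff_left)
lemma omega_diff2: "omega c (a - b) = omega c a - omega c b"
  by (simp add: omega_def inner_diff_right)
lemma omega_scale1: "omega (r *\<^sub>R a) c = r * omega a c"
  by (simp add: omega_def cJ_scaleR)
lemma omega_scale2: "omega c (r *\<^sub>R a) = r * omega c a"
  by (simp add: omega_def)
lemma omega_minus1: "omega (- a) c = - omega a c"
  by (simp add: omega_def cJ_minus)
lemma omega_minus2: "omega c (- a) = - omega c a"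
  by (simp add: omega_def)
lemma omega_bound: "\<bar>omega x y\<bar> \<le> norm x * norm y"
  unfolding omega_def using Cauchy_Schwarz_ineq2[of "cJ x" y] by (simp add: norm_cJ)




locale cbody =
  fixes X :: "(complex ^ 'n) set"
  assumes cpt: "compact X" and cvx: "convex X" and zint: "0 \<in> interior X"
    and symm: "\<And>x. x \<in> X \<Longrightarrow> - x \<in> X" and strict: "strictly_convex X"
begin

lemma clo: "closed X" using cpt compact_imp_closed by blast
lemma zX: "0 \<in> X" using zint interior_subset by blast
lemma Xne: "X \<noteq> {}" using zX by blast

definition rho :: real where "rho = (SOME r. r > 0 \<and> cball 0 r \<subseteq> X)"
definition RR :: real where "RR = (SOME r. r > 0 \<and> X \<subseteq> cball 0 r)"

lemma rho: "rho > 0" "cball 0 rho \<subseteq> X"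
proof -
  obtain e where e: "e > 0" "ball 0 e \<subseteq> X" using zint by (meson mem_interior)
  have "e/2 > 0 \<and> cball 0 (e/2) \<subseteq> X" using e by (auto simp: subset_iff)
  hence "\<exists>r. r > 0 \<and> cball 0 r \<subseteq> X" by blast
  from someI_ex[OF this] show "rho > 0" "cball 0 rho \<subseteq> X" unfolding rho_def by auto
qed

lemma RR: "RR > 0" "X \<subseteq> cball 0 RR"
proof -
  obtain b where b: "b > 0" "\<forall>x\<in>X. norm x \<le> b"
    using compact_imp_bounded[OF cpt] unfolding bounded_pos by blast
  hence "b > 0 \<and> X \<subseteq> cball 0 b" by (auto simp: subset_iff)
  hence "\<exists>r. r > 0 \<and> X \<subseteq> cball 0 r" by blast
  from someI_ex[OF this] show "RR > 0" "X \<subseteq> cball 0 RR" unfolding RR_def by auto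
qed

lemma normX: "x \<in> X \<Longrightarrow> norm x \<le> RR" using RR by auto

lemma rho_in: "norm y \<le> rho \<Longrightarrow> y \<in> X" using rho by auto

definition Xo :: "(complex ^ 'n) set" where "Xo = {q. \<forall>x\<in>X. q \<bullet> x \<le> 1}"
definition mu :: "complex ^ 'n \<Rightarrow> real" where "mu y = (SUP q\<in>Xo. q \<bullet> y)"

lemma Xo_norm: "q \<in> Xo \<Longrightarrow> norm q * rho \<le> 1"
proof (cases "q = 0")
  case False
  assume q: "q \<in> Xo"
  let ?x = "(rho / norm q) *\<^sub>R q"
  have "?x \<in> X" using rho by (intro rho_in) (simp add: False)
  hence "q \<bullet> ?x \<le> 1" using q unfolding Xo_def by blast
  also have "q \<bullet> ?x = rho * norm q" using False by (simp add: power2_norm_eq_inner[symmetric] power2_eq_square)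
  finally show ?thesis by (simp add: mult.commute)
qed (use rho in auto)

lemma Xo_bound: "q \<in> Xo \<Longrightarrow> q \<bullet> y \<le> norm y / rho"
proof -
  assume q: "q \<in> Xo"
  have "q \<bullet> y \<le> norm q * norm y" by (rule norm_cauchy_schwarz)
  also have "\<dots> \<le> (1/rho) * norm y" using Xo_norm[OF q] rho(1)
    by (intro mult_right_mono) (auto simp: field_simps)
  finally show ?thesis by simp
qed

lemma zXo: "0 \<in> Xo" by (simp add: Xo_def)

lemma bdd: "bdd_above ((\<lambda>q. q \<bullet> y) ` Xo)"
  using Xo_bound by (auto intro!: bdd_aboveI2)

lemma mu_ge: "q \<in> Xo \<Longrightarrow> q \<bullet> y \<le> mu y"
  unfolding mu_def by (rule cSUP_upper[OF _ bdd])

lemma mu_le: "(\<And>q. q \<in> Xo \<Longrightarrow> q \<bullet> y \<le> c) \<Longrightarrow> mu y \<le> c"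
  unfolding mu_def using zXo by (intro cSUP_least) auto

lemma mu_nonneg: "mu y \<ge> 0" using mu_ge[OF zXo, of y] by simp

lemma mu_lip: "mu a \<le> mu b + norm (a - b) / rho"
proof (rule mu_le)
  fix q assume q: "q \<in> Xo"
  have "q \<bullet> a = q \<bullet> b + q \<bullet> (a - b)" by (simp add: inner_diff_right)
  also have "\<dots> \<le> mu b + norm (a - b) / rho" using mu_ge[OF q] Xo_bound[OF q] by (intro add_mono)
  finally show "q \<bullet> a \<le> mu b + norm (a - b) / rho" .
qed

lemma mu_lip_abs: "\<bar>mu a - mu b\<bar> \<le> norm (a - b) / rho"
  using mu_lip[of a b] mu_lip[of b a] by (simp add: norm_minus_commute)

lemma mu_le_norm: "mu y \<le> norm y / rho"
  using mu_lip[of y 0] mu_nonneg[of 0] mu_le[of 0 0] by simp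

lemma mu0: "mu 0 = 0" using mu_le_norm[of 0] mu_nonneg[of 0] by simp

lemma mu_scale: assumes "c \<ge> 0" shows "mu (c *\<^sub>R y) = c * mu y"
proof (cases "c = 0")
  case True thus ?thesis by (simp add: mu0)
next
  case False
  hence c: "c > 0" using assms by simp
  have "mu (c *\<^sub>R y) \<le> c * mu y"
    by (rule mu_le) (use c mu_ge in auto)
  moreover have "mu y \<le> mu (c *\<^sub>R y) / c"
  proof (rule mu_le)
    fix q assume "q \<in> Xo"
    from mu_ge[OF this, of "c *\<^sub>R y"] have "c * (q \<bullet> y) \<le> mu (c *\<^sub>R y)" by simp
    thus "q \<bullet> y \<le> mu (c *\<^sub>R y) / c" using c by (simp add: field_simps)
  qed
  ultimately show ?thesis using c by (simp add: field_simps)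
qed

lemma mu_lower: "norm y / RR \<le> mu y"
proof (cases "y = 0")
  case False
  let ?q = "(1 / (RR * norm y)) *\<^sub>R y"
  have "?q \<in> Xo" unfolding Xo_def
  proof safe
    fix x assume "x \<in> X"
    have "?q \<bullet> x \<le> norm ?q * norm x" by (rule norm_cauchy_schwarz)
    also have "\<dots> = norm x / RR" using False RR(1) by simp
    also have "\<dots> \<le> 1" using normX[OF \<open>x\<in>X\<close>] RR(1) by simp
    finally show "?q \<bullet> x \<le> 1" .
  qed
  from mu_ge[OF this, of y] show ?thesis using False RR(1)
    by (simp add: power2_norm_eq_inner[symmetric] power2_eq_square)
qed (simp add: mu0)

lemma mu_pos: "y \<noteq> 0 \<Longrightarrow> mu y > 0"
  using mu_lower[of y] RR(1) by (smt (verit) divide_pos_pos zero_less_norm_iff)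

lemma in_X_iff: "y \<in> X \<longleftrightarrow> mu y \<le> 1"
proof
  assume "y \<in> X" thus "mu y \<le> 1" by (intro mu_le) (auto simp: Xo_def)
next
  assume m: "mu y \<le> 1"
  show "y \<in> X"
  proof (rule ccontr)
    assume "y \<notin> X"
    then obtain a b where ab: "a \<bullet> y < b" "\<forall>x\<in>X. a \<bullet> x > b"
      using separating_hyperplane_closed_point[OF cvx clo] by blast
    have b0: "b < 0" using ab(2) zX by force
    let ?q = "(1 / (-b)) *\<^sub>R (- a)"
    have "?q \<in> Xo" unfolding Xo_def using ab(2) b0 by (auto simp: field_simps)
    from mu_ge[OF this, of y] have "?q \<bullet> y \<le> 1" using m by simp
    thus False using ab(1) b0 by (simp add: field_simps)
  qed
qed

lemma mu_less_interior: assumes "mu y < 1" shows "y \<in> interior X"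
proof -
  have "ball y ((1 - mu y) * rho) \<subseteq> X"
  proof
    fix x assume "x \<in> ball y ((1 - mu y) * rho)"
    hence "norm (x - y) < (1 - mu y) * rho" by (simp add: dist_norm norm_minus_commute)
    hence "norm (x - y) / rho < 1 - mu y" using rho(1) by (simp add: field_simps)
    thus "x \<in> X" using mu_lip[of x y] in_X_iff by simp
  qed
  moreover have "(1 - mu y) * rho > 0" using assms rho(1) by simp
  ultimately show ?thesis by (meson centre_in_ball interior_maximal open_ball subsetD)
qed

lemma interior_mu: assumes "y \<in> interior X" shows "mu y < 1"
proof (cases "y = 0")
  case True thus ?thesis by (simp add: mu0)
next
  case False
  obtain e where e: "e > 0" "ball y e \<subseteq> X" using assms by (meson mem_interior)
  let ?c = "1 + e / (2 * norm y)"
  have "dist y (?c *\<^sub>R y) < e" using e(1) False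
    by (simp add: dist_norm algebra_simps)
  hence "?c *\<^sub>R y \<in> X" using e by auto
  hence "?c * mu y \<le> 1" using mu_scale[of ?c y] in_X_iff e(1) by (simp add: add_pos_nonneg)
  moreover have "?c > 1" using e(1) False by simp
  moreover have "mu y > 0" using mu_pos False by simp
  ultimately have "mu y < ?c * mu y" using mult_strict_right_mono[of 1 ?c "mu y"] by simp
  thus ?thesis using \<open>?c * mu y \<le> 1\<close> by linarith
qed

lemma frontier_iff: "y \<in> frontier X \<longleftrightarrow> mu y = 1"
proof -
  have "frontier X = X - interior X" using clo by (simp add: frontier_def closure_closed)
  hence "y \<in> frontier X \<longleftrightarrow> mu y \<le> 1 \<and> \<not> mu y < 1"
    using in_X_iff interior_mu mu_less_interior by blast
  thus ?thesis by linarith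
qed

lemma frontier_sub: "frontier X \<subseteq> X" using clo by (simp add: frontier_subset_closed)

lemma frontier_nz: "y \<in> frontier X \<Longrightarrow> y \<noteq> 0" using frontier_iff mu0 by auto

lemma proj_frontier: "y \<noteq> 0 \<Longrightarrow> (1 / mu y) *\<^sub>R y \<in> frontier X"
  using frontier_iff mu_scale[of "1 / mu y" y] mu_pos[of y] by simp

lemma frontier_proj_id: "y \<in> frontier X \<Longrightarrow> (1 / mu y) *\<^sub>R y = y"
  using frontier_iff by simp

end



context cbody begin

lemma am_ex: "q \<noteq> 0 \<Longrightarrow> \<exists>!y. y \<in> X \<and> (\<forall>y'\<in>X. q \<bullet> y' \<le> q \<bullet> y)"
proof -
  assume q: "q \<noteq> 0"
  have "continuous_on X (\<lambda>y. q \<bullet> y)" by (intro continuous_intros)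
  then obtain y where y: "y \<in> X" "\<forall>y'\<in>X. q \<bullet> y' \<le> q \<bullet> y"
    using continuous_attains_sup[OF cpt Xne] by blast
  moreover have "y2 = y" if y2: "y2 \<in> X" "\<forall>y'\<in>X. q \<bullet> y' \<le> q \<bullet> y2" for y2
  proof (rule ccontr)
    assume ne: "y2 \<noteq> y"
    let ?m = "(1/2::real) *\<^sub>R y + (1/2::real) *\<^sub>R y2"
    have "\<forall>t. 0 < t \<and> t < 1 \<longrightarrow> (1 - t) *\<^sub>R y + t *\<^sub>R y2 \<in> interior X"
      using strict ne y(1) y2(1) unfolding strictly_convex_def by metis
    from this[rule_format, of "1/2"] have "?m \<in> interior X" by simp
    then obtain e where e: "e > 0" "ball ?m e \<subseteq> X" by (meson mem_interior)
    let ?w = "?m + (e / (2 * norm q)) *\<^sub>R q"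
    have "dist ?m ?w < e" using e(1) q by (simp add: dist_norm)
    hence "?w \<in> X" using e by auto
    hence "q \<bullet> ?w \<le> q \<bullet> y" using y by blast
    moreover have "q \<bullet> y2 = q \<bullet> y" using y y2 by (meson order_antisym)
    moreover have "q \<bullet> ?w = (1/2) * (q \<bullet> y) + (1/2) * (q \<bullet> y2) + (e / (2 * norm q)) * (q \<bullet> q)"
      by (simp add: inner_add_right)
    moreover have "q \<bullet> q > 0" using q by simp
    moreover have "e / (2 * norm q) > 0" using e q by simp
    ultimately show False using mult_pos_pos[of "e / (2 * norm q)" "q \<bullet> q"] by linarith
  qed
  ultimately show ?thesis by blast
qed

definition am :: "complex ^ 'n \<Rightarrow> complex ^ 'n" where
  "am q = (THE y. y \<in> X \<and> (\<forall>y'\<in>X. q \<bullet> y' \<le> q \<bullet> y))"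

lemma am: assumes "q \<noteq> 0" shows "am q \<in> X" "\<And>y. y \<in> X \<Longrightarrow> q \<bullet> y \<le> q \<bullet> am q"
  using theI'[OF am_ex[OF assms]] unfolding am_def by auto

lemma am_unique: assumes q: "q \<noteq> 0" and y: "y \<in> X" "\<And>y'. y' \<in> X \<Longrightarrow> q \<bullet> y' \<le> q \<bullet> y" shows "y = am q"
proof -
  obtain y0 where y0: "y0 \<in> X \<and> (\<forall>y'\<in>X. q \<bullet> y' \<le> q \<bullet> y0)"
     and u: "\<And>z. z \<in> X \<and> (\<forall>y'\<in>X. q \<bullet> y' \<le> q \<bullet> z) \<Longrightarrow> z = y0"
    using am_ex[OF q] by (elim ex1E) blast
  have "y = y0" using y by (intro u) blast
  moreover have "am q = y0" using am[OF q] by (intro u) blast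
  ultimately show ?thesis by simp
qed

lemma am_strict: assumes "q \<noteq> 0" "y \<in> X" "y \<noteq> am q" shows "q \<bullet> y < q \<bullet> am q"
proof (rule ccontr)
  assume "\<not> ?thesis"
  hence "q \<bullet> y = q \<bullet> am q" using am(2)[OF assms(1,2)] by simp
  hence "y = am q" using am[OF assms(1)] assms by (intro am_unique) auto
  thus False using assms by simp
qed

lemma am_pos: assumes "q \<noteq> 0" shows "q \<bullet> am q \<ge> rho * norm q" "q \<bullet> am q > 0"
proof -
  have "(rho / norm q) *\<^sub>R q \<in> X" using rho assms by (intro rho_in) simp
  from am(2)[OF assms this] show *: "q \<bullet> am q \<ge> rho * norm q"
    using assms by (simp add: power2_norm_eq_inner[symmetric] power2_eq_square)
  have "rho * norm q > 0" using rho(1) assms by simp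
  thus "q \<bullet> am q > 0" using * by linarith
qed

lemma am_frontier: assumes q: "q \<noteq> 0" shows "am q \<in> frontier X"
proof -
  let ?a = "am q"
  have a0: "?a \<noteq> 0" using am_pos[OF q] by auto
  have "mu ?a \<le> 1" using am(1)[OF q] in_X_iff by blast
  moreover have "\<not> mu ?a < 1"
  proof
    assume m: "mu ?a < 1"
    have mp: "mu ?a > 0" using mu_pos a0 by blast
    let ?b = "(1 / mu ?a) *\<^sub>R ?a"
    have "?b \<in> X" using proj_frontier[OF a0] frontier_sub by blast
    hence "q \<bullet> ?b \<le> q \<bullet> ?a" using am(2)[OF q] by blast
    hence "(1 / mu ?a) * (q \<bullet> ?a) \<le> 1 * (q \<bullet> ?a)" by simp
    hence "1 / mu ?a \<le> 1" using am_pos(2)[OF q] by (meson mult_le_cancel_right_pos)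
    thus False using m mp by (simp add: field_simps)
  qed
  ultimately have "mu ?a = 1" by linarith
  thus ?thesis using frontier_iff by blast
qed

lemma am_scale: "q \<noteq> 0 \<Longrightarrow> c > 0 \<Longrightarrow> am (c *\<^sub>R q) = am q"
  by (rule am_unique[symmetric]) (use am in auto)

lemma am_cont: "continuous_on (- {0}) am"
proof -
  have fim: "am \<in> (- {0}) \<rightarrow> X" using am by auto
  let ?G = "{p::(complex^'n) \<times> (complex^'n). \<forall>y'\<in>X. fst p \<bullet> y' \<le> fst p \<bullet> snd p}"
  have Geq: "?G = (\<Inter>y'\<in>X. {p. fst p \<bullet> y' \<le> fst p \<bullet> snd p})" by auto
  have cG: "closed ?G" unfolding Geq
    by (intro closed_INT ballI closed_Collect_le continuous_intros)
  moreover have geq: "(\<lambda>x. Pair x (am x)) ` (- {0}) = ((- {0}) \<times> X) \<inter> ?G"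
  proof (intro equalityI subsetI)
    fix p assume "p \<in> (\<lambda>x. Pair x (am x)) ` (- {0})"
    then obtain a where "a \<noteq> 0" "p = (a, am a)" by auto
    thus "p \<in> ((- {0}) \<times> X) \<inter> ?G" using am[of a] by auto
  next
    fix p assume p: "p \<in> ((- {0}) \<times> X) \<inter> ?G"
    obtain a b where ab: "p = (a,b)" by (cases p)
    with p have "a \<noteq> 0" "b \<in> X" "\<forall>y'\<in>X. a \<bullet> y' \<le> a \<bullet> b" by auto
    hence "b = am a" using am_unique by blast
    thus "p \<in> (\<lambda>x. Pair x (am x)) ` (- {0})" using ab \<open>a \<noteq> 0\<close> by auto
  qed
  have "closedin (top_of_set ((- {0}) \<times> X)) ((\<lambda>x. Pair x (am x)) ` (- {0}))"
    unfolding geq by (rule closedin_closed_Int[OF cG])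
  thus ?thesis using continuous_closed_graph_eq[OF cpt fim] by blast
qed

end



lemma perp_lemma:
  fixes \<nu> w :: "'a::real_inner"
  assumes "\<nu> \<noteq> 0" "\<And>v. \<nu> \<bullet> v = 0 \<Longrightarrow> w \<bullet> v = 0"
  shows "w = ((w \<bullet> \<nu>) / (\<nu> \<bullet> \<nu>)) *\<^sub>R \<nu>"
proof -
  let ?l = "(w \<bullet> \<nu>) / (\<nu> \<bullet> \<nu>)"
  let ?r = "w - ?l *\<^sub>R \<nu>"
  have nn: "\<nu> \<bullet> \<nu> \<noteq> 0" using assms(1) by simp
  have "\<nu> \<bullet> ?r = 0" using nn by (simp add: inner_diff_right inner_commute)
  hence "w \<bullet> ?r = 0" using assms(2) by blast
  hence "?r \<bullet> ?r = 0" using \<open>\<nu> \<bullet> ?r = 0\<close> by (simp add: inner_diff_left inner_commute)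
  thus ?thesis by simp
qed

lemma deriv_eps:
  assumes "(f has_derivative f') (at x)" "e > 0"
  shows "\<exists>d>0. \<forall>y. norm (y - x) < d \<longrightarrow> norm (f y - f x - f' (y - x)) \<le> e * norm (y - x)"
  using assms unfolding has_derivative_at_alt by blast

context cbody begin

lemma tangent_max:
  assumes v: "v \<in> tangent_space (frontier X) p" and a: "\<forall>y\<in>X. a \<bullet> y \<le> a \<bullet> p"
  shows "a \<bullet> v = 0"
proof -
  obtain \<gamma> e where g: "e > 0" "\<gamma> 0 = p" "\<forall>t. \<bar>t\<bar> < e \<longrightarrow> \<gamma> t \<in> frontier X"
    "(\<gamma> has_vector_derivative v) (at 0)"
    using v unfolding tangent_space_def by blast
  have "((\<lambda>t. a \<bullet> \<gamma> t) has_derivative (\<lambda>x. a \<bullet> (x *\<^sub>R v))) (at 0)"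
    using g(4) unfolding has_vector_derivative_def by (rule has_derivative_inner_right)
  moreover have "(\<lambda>x. a \<bullet> (x *\<^sub>R v)) = (*) (a \<bullet> v)" by (auto simp: mult.commute)
  ultimately have "((\<lambda>t. a \<bullet> \<gamma> t) has_real_derivative (a \<bullet> v)) (at 0)"
    by (simp add: has_field_derivative_def)
  moreover have "\<forall>y. \<bar>0 - y\<bar> < e \<longrightarrow> a \<bullet> \<gamma> y \<le> a \<bullet> \<gamma> 0"
    using g(2,3) a frontier_sub by auto
  ultimately show ?thesis using DERIV_local_max g(1) by blast
qed

end

locale cbody1 = cbody +
  assumes C1: "\<forall>p\<in>frontier X. \<exists>U (f::_ \<Rightarrow> real) g. open U \<and> p \<in> U \<and>
        (\<forall>x\<in>U. (f has_derivative (\<lambda>h. g x \<bullet> h)) (at x)) \<and> g p \<noteq> 0 \<and>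
        X \<inter> U = {x\<in>U. f x \<le> 0}"
begin

lemma frontier_normal:
  assumes p: "p \<in> frontier X"
  shows "\<exists>\<nu>. \<nu> \<noteq> 0 \<and> \<nu> \<bullet> p > 0 \<and> (\<forall>y\<in>X. \<nu> \<bullet> y \<le> \<nu> \<bullet> p) \<and>
             tangent_space (frontier X) p = {v. \<nu> \<bullet> v = 0}"
proof -
  obtain U f g where U: "open U" "p \<in> U" and fd: "\<forall>x\<in>U. (f has_derivative (\<lambda>h. g x \<bullet> h)) (at x)"
    and gp: "g p \<noteq> 0" and XU: "X \<inter> U = {x\<in>U. f x \<le> 0}"
    using bspec[OF C1 p] by (elim exE conjE) blast
  define \<nu> where "\<nu> = g p"
  have pX: "p \<in> X" using p frontier_sub by blast
  have fdp: "(f has_derivative (\<lambda>h. \<nu> \<bullet> h)) (at p)" using fd U(2) unfolding \<nu>_def by blast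
  obtain d2 where d2: "d2 > 0" "ball p d2 \<subseteq> U" using U by (meson openE)
  have fp: "f p = 0"
  proof (rule ccontr)
    assume "f p \<noteq> 0"
    moreover have "f p \<le> 0" using pX U(2) XU by blast
    ultimately have neg: "f p < 0" by simp
    have "continuous (at p) f" using fdp by (rule has_derivative_continuous)
    then obtain d where d: "d > 0" "\<forall>y. dist y p < d \<longrightarrow> dist (f y) (f p) < - f p"
      using neg unfolding continuous_at_eps_delta by (meson neg_0_less_iff_less)
    have "ball p (min d d2) \<subseteq> X"
    proof
      fix y assume "y \<in> ball p (min d d2)"
      hence y: "dist y p < d" "y \<in> U" using d2 by (auto simp: dist_commute)
      hence "dist (f y) (f p) < - f p" using d(2) by blast
      hence "\<bar>f y - f p\<bar> < - f p" by (simp only: dist_real_def)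
      hence "f y < 0" by linarith
      hence "y \<in> X \<inter> U" unfolding XU using y(2) by simp
      thus "y \<in> X" by blast
    qed
    hence "ball p (min d d2) \<subseteq> interior X" by (rule interior_maximal) simp
    moreover have "p \<in> ball p (min d d2)" using d(1) d2(1) by simp
    ultimately have "p \<in> interior X" by blast
    thus False using p by (simp add: frontier_def)
  qed
  have half: "\<forall>y\<in>X. \<nu> \<bullet> y \<le> \<nu> \<bullet> p"
  proof (rule ccontr)
    assume "\<not> ?thesis"
    then obtain y where y: "y \<in> X" "\<nu> \<bullet> (y - p) > 0" by (auto simp: inner_diff_right)
    define c where "c = \<nu> \<bullet> (y - p)"
    define D where "D = norm (y - p)"
    have "y - p \<noteq> 0"
    proof
      assume "y - p = 0" with y(2) show False by simp
    qed
    hence D: "D > 0" unfolding D_def by simp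
    obtain d1 where d1: "d1 > 0" "\<forall>w. norm (w - p) < d1 \<longrightarrow>
        norm (f w - f p - \<nu> \<bullet> (w - p)) \<le> (c / (2*D)) * norm (w - p)"
    proof -
      have "c / (2*D) > 0" using y(2) D unfolding c_def by simp
      from deriv_eps[OF fdp this] show ?thesis using that by blast
    qed
    define t where "t = min 1 (min d1 d2 / (2*D))"
    have t: "t > 0" "t \<le> 1" "t * D < min d1 d2"
      using d1(1) d2(1) D unfolding t_def by (auto simp: min_def field_simps)
    define w where "w = p + t *\<^sub>R (y - p)"
    have "w = (1 - t) *\<^sub>R p + t *\<^sub>R y" unfolding w_def by (simp add: algebra_simps)
    hence wX: "w \<in> X" using cvx pX y(1) t unfolding convex_def by auto
    have nw: "norm (w - p) = t * D" unfolding w_def D_def using t by simp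
    hence "w \<in> U" using d2 t(3) by (auto simp: dist_norm norm_minus_commute)
    hence "f w \<le> 0" using XU wX by blast
    moreover have "norm (f w - f p - \<nu> \<bullet> (w - p)) \<le> (c / (2*D)) * (t * D)"
    proof -
      have "norm (w - p) < d1" using nw t(3) by simp
      with d1(2) have "norm (f w - f p - \<nu> \<bullet> (w - p)) \<le> (c / (2*D)) * norm (w - p)" by blast
      thus ?thesis unfolding nw .
    qed
    moreover have "\<nu> \<bullet> (w - p) = t * c" unfolding w_def c_def by simp
    moreover have "(c / (2*D)) * (t * D) = t * c / 2" using D by (simp add: field_simps)
    moreover have "t * c > 0" using t y(2) unfolding c_def by simp
    ultimately show False using fp by (simp add: abs_if split: if_splits)
  qed
  have nu0: "\<nu> \<noteq> 0" using gp unfolding \<nu>_def .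
  have nup: "\<nu> \<bullet> p > 0"
  proof -
    have "(rho / norm \<nu>) *\<^sub>R \<nu> \<in> X" using rho nu0 by (intro rho_in) simp
    hence "rho * norm \<nu> \<le> \<nu> \<bullet> p" using half nu0
      by (auto simp: power2_norm_eq_inner[symmetric] power2_eq_square)
    moreover have "rho * norm \<nu> > 0" using rho(1) nu0 by simp
    ultimately show ?thesis by linarith
  qed
  have sub1: "tangent_space (frontier X) p \<subseteq> {v. \<nu> \<bullet> v = 0}"
    using tangent_max half by blast
  have sub2: "v \<in> tangent_space (frontier X) p" if v: "\<nu> \<bullet> v = 0" for v
  proof -
    have p0: "p \<noteq> 0" using frontier_nz p by blast
    have mulow: "mu (p + t *\<^sub>R v) \<ge> 1" for t
    proof -
      have "(1 / (\<nu> \<bullet> p)) *\<^sub>R \<nu> \<in> Xo" unfolding Xo_def using half nup by (auto simp: field_simps)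
      from mu_ge[OF this, of "p + t *\<^sub>R v"] show ?thesis using nup v by (simp add: inner_add_right)
    qed
    have muup: "\<exists>d>0. \<forall>t. \<bar>t\<bar> < d \<longrightarrow> mu (p + t *\<^sub>R v) \<le> 1 + eps * \<bar>t\<bar>" if eps: "eps > 0" for eps
    proof -
      define a where "a = \<nu> \<bullet> p"
      define K where "K = norm v + eps * norm p"
      have K: "K > 0" using eps p0 unfolding K_def by (simp add: add_nonneg_pos)
      have a: "a > 0" using nup unfolding a_def .
      obtain d1 where d1: "d1 > 0" "\<forall>w. norm (w - p) < d1 \<longrightarrow>
          norm (f w - f p - \<nu> \<bullet> (w - p)) \<le> (eps * a / (4 * K)) * norm (w - p)"
      proof -
        have "eps * a / (4 * K) > 0" using eps a K by simp
        from deriv_eps[OF fdp this] show ?thesis using that by blast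
      qed
      define d where "d = min (1 / eps) (min d1 d2 / K)"
      have d: "d > 0" using eps d1(1) d2(1) K unfolding d_def by simp
      show ?thesis
      proof (intro exI[of _ d] conjI allI impI d)
        fix t :: real assume tl: "\<bar>t\<bar> < d"
        show "mu (p + t *\<^sub>R v) \<le> 1 + eps * \<bar>t\<bar>"
        proof (cases "t = 0")
          case True thus ?thesis using frontier_iff p by simp
        next
          case False
          define s where "s = eps * \<bar>t\<bar>"
          have "\<bar>t\<bar> < 1 / eps" using tl unfolding d_def by simp
          hence "eps * \<bar>t\<bar> < 1" using eps by (simp add: field_simps)
          hence s: "s > 0" "s \<le> 1" using False eps unfolding s_def by auto
          define w where "w = (1 / (1 + s)) *\<^sub>R (p + t *\<^sub>R v)"
          have e1: "(1 / (1 + s)) * (1 + s) = 1" using s by simp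
          have "w - p = (1 / (1 + s)) *\<^sub>R (p + t *\<^sub>R v) - ((1 / (1 + s)) * (1 + s)) *\<^sub>R p"
            unfolding w_def e1 by simp
          also have "\<dots> = (1 / (1 + s)) *\<^sub>R (t *\<^sub>R v - s *\<^sub>R p)"
            by (simp only: scaleR_right_distrib scaleR_right_diff_distrib distrib_left scaleR_add_left
               mult_1_right scaleR_scaleR) (simp add: algebra_simps)
          finally have wp: "w - p = (1 / (1 + s)) *\<^sub>R (t *\<^sub>R v - s *\<^sub>R p)" .
          have "norm (w - p) \<le> norm (t *\<^sub>R v - s *\<^sub>R p)"
            unfolding wp norm_scaleR using s by (intro mult_left_le_one_le) auto
          also have "\<dots> \<le> \<bar>t\<bar> * norm v + s * norm p"
            using norm_triangle_ineq4[of "t *\<^sub>R v" "s *\<^sub>R p"] s by simp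
          also have "\<dots> = \<bar>t\<bar> * K" unfolding s_def K_def by (simp add: algebra_simps)
          finally have nwp: "norm (w - p) \<le> \<bar>t\<bar> * K" .
          have tK: "\<bar>t\<bar> * K < min d1 d2" using tl K unfolding d_def by (simp add: field_simps)
          have "w \<in> U" using d2 nwp tK by (auto simp: dist_norm norm_minus_commute)
          have err: "norm (f w - f p - \<nu> \<bullet> (w - p)) \<le> (eps * a / (4 * K)) * (\<bar>t\<bar> * K)"
            using d1(2) nwp tK eps a K
            by (smt (verit, ccfv_SIG) divide_pos_pos min_less_iff_conj mult_left_mono zero_less_mult_iff zero_less_numeral)
          have e2: "(eps * a / (4 * K)) * (\<bar>t\<bar> * K) = s * a / 4" unfolding s_def using K by (simp add: field_simps)
          have nwv: "\<nu> \<bullet> (w - p) = - (s * a) / (1 + s)" unfolding wp a_def using v s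
            by (simp add: inner_diff_right field_simps)
          have "s * a / (1 + s) \<ge> s * a / 2" using s a by (intro divide_left_mono) auto
          moreover have "\<bar>f w - f p - \<nu> \<bullet> (w - p)\<bar> \<le> s * a / 4" using err unfolding e2 real_norm_def .
          hence "f w - f p - \<nu> \<bullet> (w - p) \<le> s * a / 4" by (rule order_trans[OF abs_ge_self])
          moreover have "s * a > 0" using s a by simp
          moreover have "- (s * a) / (1 + s) = - (s * a / (1 + s))" by simp
          ultimately have "f w \<le> 0" using nwv fp by linarith
          hence "w \<in> X" using XU \<open>w \<in> U\<close> by blast
          hence "mu w \<le> 1" using in_X_iff by blast
          moreover have "mu w = (1 / (1 + s)) * mu (p + t *\<^sub>R v)" unfolding w_def using s
            by (intro mu_scale) simp
          ultimately show ?thesis using s unfolding s_def by (simp add: field_simps)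
        qed
      qed
    qed
    define \<gamma> where "\<gamma> t = (1 / mu (p + t *\<^sub>R v)) *\<^sub>R (p + t *\<^sub>R v)" for t
    define e where "e = norm p / (norm v + 1)"
    have e: "e > 0" using p0 unfolding e_def by (simp add: add_nonneg_pos)
    have inF: "\<gamma> t \<in> frontier X" if "\<bar>t\<bar> < e" for t
    proof -
      have "norm (t *\<^sub>R v) < norm p"
      proof -
        have "norm (t *\<^sub>R v) = \<bar>t\<bar> * norm v" by simp
        also have "\<dots> \<le> \<bar>t\<bar> * (norm v + 1)" by (simp add: mult_left_mono)
        also have "\<dots> < e * (norm v + 1)" using that by (intro mult_strict_right_mono) (auto simp: add_nonneg_pos)
        also have "\<dots> = norm p"
        proof -
          have "norm v + 1 > 0" using norm_ge_zero[of v] by linarith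
          thus ?thesis unfolding e_def by simp
        qed
        finally show ?thesis .
      qed
      hence "p + t *\<^sub>R v \<noteq> 0" by (metis add.inverse_unique norm_minus_cancel order_less_irrefl)
      thus ?thesis unfolding \<gamma>_def by (rule proj_frontier)
    qed
    have g0: "\<gamma> 0 = p" unfolding \<gamma>_def using frontier_iff p by simp
    have "(\<gamma> has_derivative (\<lambda>t. t *\<^sub>R v)) (at 0)"
      unfolding has_derivative_at_alt
    proof (intro conjI allI impI bounded_linear_scaleR_left)
      fix eps :: real assume eps: "eps > 0"
      define eps' where "eps' = eps / (norm p + norm v + 1)"
      have eps': "eps' > 0" using eps unfolding eps'_def by (simp add: add_nonneg_pos)
      obtain d where d: "d > 0" "\<forall>t. \<bar>t\<bar> < d \<longrightarrow> mu (p + t *\<^sub>R v) \<le> 1 + eps' * \<bar>t\<bar>"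
        using muup[OF eps'] by blast
      show "\<exists>d>0. \<forall>y. norm (y - 0) < d \<longrightarrow> norm (\<gamma> y - \<gamma> 0 - (y - 0) *\<^sub>R v) \<le> eps * norm (y - 0)"
      proof (intro exI[of _ "min d 1"] conjI allI impI)
        show "min d 1 > 0" using d by simp
        fix t :: real assume "norm (t - 0) < min d 1"
        hence t: "\<bar>t\<bar> < d" "\<bar>t\<bar> < 1" by auto
        define m where "m = mu (p + t *\<^sub>R v)"
        have m: "m \<ge> 1" "m \<le> 1 + eps' * \<bar>t\<bar>" using mulow d(2) t(1) unfolding m_def by auto
        have "\<gamma> t - \<gamma> 0 - t *\<^sub>R v = (1 / m - 1) *\<^sub>R (p + t *\<^sub>R v)"
          unfolding \<gamma>_def g0[unfolded \<gamma>_def] m_def[symmetric] using frontier_iff p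
          by (simp add: algebra_simps)
        hence "norm (\<gamma> t - \<gamma> 0 - t *\<^sub>R v) = \<bar>1 / m - 1\<bar> * norm (p + t *\<^sub>R v)" by simp
        also have "\<dots> \<le> (eps' * \<bar>t\<bar>) * (norm p + norm v + 1)"
        proof (rule mult_mono)
          have "\<bar>1 / m - 1\<bar> = (m - 1) / m" using m by (simp add: field_simps)
          also have "\<dots> \<le> (m - 1) / 1" using m by (intro divide_left_mono) auto
          finally show "\<bar>1 / m - 1\<bar> \<le> eps' * \<bar>t\<bar>" using m by simp
          have "norm (p + t *\<^sub>R v) \<le> norm p + \<bar>t\<bar> * norm v" using norm_triangle_ineq[of p "t *\<^sub>R v"] by simp
          also have "\<dots> \<le> norm p + norm v + 1"
          proof -
            have "\<bar>t\<bar> * norm v \<le> norm v" using t(2) by (intro mult_left_le_one_le) auto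
            thus ?thesis by linarith
          qed
          finally show "norm (p + t *\<^sub>R v) \<le> norm p + norm v + 1" .
        qed (use eps' in auto)
        also have "\<dots> = eps * \<bar>t\<bar>"
        proof -
          have "norm p + norm v + 1 > 0" using norm_ge_zero[of p] norm_ge_zero[of v] by linarith
          hence "(norm p + norm v + 1) / (norm p + norm v + 1) = 1" by simp
          thus ?thesis unfolding eps'_def by (metis mult.commute times_divide_eq_left times_divide_eq_right mult_1_right)
        qed
        finally show "norm (\<gamma> t - \<gamma> 0 - (t - 0) *\<^sub>R v) \<le> eps * norm (t - 0)" by simp
      qed
    qed
    hence "(\<gamma> has_vector_derivative v) (at 0)" by (simp add: has_vector_derivative_def)
    thus ?thesis unfolding tangent_space_def using e g0 inF by blast
  qed
  show ?thesis using nu0 nup half sub1 sub2 by (intro exI[of _ \<nu>]) blast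
qed

end



context cbody1 begin

lemma cone:
  assumes p: "p \<in> frontier X" and nu: "\<nu> \<noteq> 0" "\<nu> \<bullet> p > 0" "tangent_space (frontier X) p = {v. \<nu> \<bullet> v = 0}"
    and q: "q \<noteq> 0" "\<forall>y\<in>X. q \<bullet> y \<le> q \<bullet> p"
  shows "\<exists>l>0. q = l *\<^sub>R \<nu>"
proof -
  have "q \<bullet> v = 0" if "\<nu> \<bullet> v = 0" for v using tangent_max[of v p q] nu(3) q(2) that by blast
  hence qe: "q = ((q \<bullet> \<nu>) / (\<nu> \<bullet> \<nu>)) *\<^sub>R \<nu>" by (rule perp_lemma[OF nu(1)])
  define l where "l = (q \<bullet> \<nu>) / (\<nu> \<bullet> \<nu>)"
  have qe': "q = l *\<^sub>R \<nu>" using qe unfolding l_def .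
  have "q \<bullet> p = l * (\<nu> \<bullet> p)" by (metis qe' inner_scaleR_left)
  moreover have "q \<bullet> p > 0"
  proof -
    have "(rho / norm q) *\<^sub>R q \<in> X" using rho q(1) by (intro rho_in) simp
    hence "rho * norm q \<le> q \<bullet> p" using q by (auto simp: power2_norm_eq_inner[symmetric] power2_eq_square)
    moreover have "rho * norm q > 0" using rho(1) q(1) by simp
    ultimately show ?thesis by linarith
  qed
  ultimately have "l > 0" using nu(2) by (simp add: zero_less_mult_iff)
  thus ?thesis using qe' by blast
qed

lemma char_dirs_eq:
  assumes nu: "\<nu> \<noteq> 0" "tangent_space (frontier X) p = {v. \<nu> \<bullet> v = 0}"
  shows "char_dirs X p = range (\<lambda>t. t *\<^sub>R cJ \<nu>)"
proof (intro equalityI subsetI)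
  fix u assume "u \<in> char_dirs X p"
  hence u: "\<nu> \<bullet> u = 0" "\<And>v. \<nu> \<bullet> v = 0 \<Longrightarrow> cJ u \<bullet> v = 0"
    unfolding char_dirs_def nu(2) omega_def by auto
  have "cJ u = ((cJ u \<bullet> \<nu>) / (\<nu> \<bullet> \<nu>)) *\<^sub>R \<nu>" using perp_lemma[OF nu(1) u(2)] .
  hence "cJ (cJ u) = ((cJ u \<bullet> \<nu>) / (\<nu> \<bullet> \<nu>)) *\<^sub>R cJ \<nu>" by (metis cJ_scaleR)
  hence "- u = ((cJ u \<bullet> \<nu>) / (\<nu> \<bullet> \<nu>)) *\<^sub>R cJ \<nu>" by (simp add: cJ_cJ)
  hence "u = (- ((cJ u \<bullet> \<nu>) / (\<nu> \<bullet> \<nu>))) *\<^sub>R cJ \<nu>" by (metis minus_minus scaleR_minus_left)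
  thus "u \<in> range (\<lambda>t. t *\<^sub>R cJ \<nu>)" by blast
next
  fix u assume "u \<in> range (\<lambda>t. t *\<^sub>R cJ \<nu>)"
  then obtain t where t: "u = t *\<^sub>R cJ \<nu>" by blast
  have "\<nu> \<bullet> u = 0" unfolding t using cJ_self[of \<nu>] by (simp add: inner_commute)
  moreover have "omega u v = 0" if "\<nu> \<bullet> v = 0" for v
    unfolding t omega_def cJ_scaleR cJ_cJ using that by simp
  ultimately show "u \<in> char_dirs X p" unfolding char_dirs_def nu(2) by auto
qed

definition PP where
  "PP z x \<longleftrightarrow> x \<in> frontier X \<and> z \<noteq> x \<and>
       {x + t *\<^sub>R (z - x) | t. True} = char_line X x \<and> omega x (x - z) > 0"

lemma PP_am: assumes "PP z x" shows "cJ (z - x) \<noteq> 0" "x = am (cJ (z - x))"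
proof -
  have x: "x \<in> frontier X" "z \<noteq> x" "{x + t *\<^sub>R (z - x) | t. True} = char_line X x" "omega x (x - z) > 0"
    using assms unfolding PP_def by auto
  obtain \<nu> where nu: "\<nu> \<noteq> 0" "\<nu> \<bullet> x > 0" "\<forall>y\<in>X. \<nu> \<bullet> y \<le> \<nu> \<bullet> x"
      "tangent_space (frontier X) x = {v. \<nu> \<bullet> v = 0}"
    using frontier_normal[OF x(1)] by blast
  have "z \<in> char_line X x" unfolding x(3)[symmetric] by (rule CollectI, rule exI[of _ 1]) simp
  then obtain u where u: "z = x + u" "u \<in> char_dirs X x" unfolding char_line_def by blast
  then obtain t where t: "u = t *\<^sub>R cJ \<nu>" using char_dirs_eq[OF nu(1) nu(4)] by blast
  have zx: "z - x = t *\<^sub>R cJ \<nu>" using u(1) t by simp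
  have "omega x (x - z) = - t * (cJ x \<bullet> cJ \<nu>)"
    using zx by (metis minus_diff_eq omega_def inner_minus_right inner_scaleR_right mult_minus_left)
  also have "cJ x \<bullet> cJ \<nu> = \<nu> \<bullet> x" by (simp add: inner_cJ cJ_cJ inner_commute)
  finally have "- t * (\<nu> \<bullet> x) > 0" using x(4) by simp
  hence tneg: "t < 0" using nu(2) by (simp add: mult_less_0_iff)
  have cz: "cJ (z - x) = (- t) *\<^sub>R \<nu>" unfolding zx cJ_scaleR cJ_cJ by simp
  show "cJ (z - x) \<noteq> 0" unfolding cz using tneg nu(1) by simp
  show "x = am (cJ (z - x))"
  proof (rule am_unique)
    show "cJ (z - x) \<noteq> 0" unfolding cz using tneg nu(1) by simp
    show "x \<in> X" using x(1) frontier_sub by blast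
    fix y assume "y \<in> X"
    hence "\<nu> \<bullet> y \<le> \<nu> \<bullet> x" using nu(3) by blast
    thus "cJ (z - x) \<bullet> y \<le> cJ (z - x) \<bullet> x" unfolding cz using tneg
      by (simp add: mult_left_mono)
  qed
qed

lemma PP_unique: assumes "PP z x1" "PP z x2" shows "x1 = x2"
proof (rule ccontr)
  assume ne: "x1 \<noteq> x2"
  have a1: "cJ (z - x1) \<noteq> 0" "x1 = am (cJ (z - x1))" using PP_am[OF assms(1)] by auto
  have a2: "cJ (z - x2) \<noteq> 0" "x2 = am (cJ (z - x2))" using PP_am[OF assms(2)] by auto
  have x1X: "x1 \<in> X" "x2 \<in> X" using am(1) a1 a2 by metis+
  have i1: "cJ (z - x1) \<bullet> x2 < cJ (z - x1) \<bullet> x1"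
    using am_strict[OF a1(1) x1X(2)] a1(2) ne by metis
  have i2: "cJ (z - x2) \<bullet> x1 < cJ (z - x2) \<bullet> x2"
    using am_strict[OF a2(1) x1X(1)] a2(2) ne by metis
  have e1: "cJ (z - x1) \<bullet> x2 = omega z x2 - omega x1 x2"
    "cJ (z - x1) \<bullet> x1 = omega z x1"
    "cJ (z - x2) \<bullet> x1 = omega z x1 - omega x2 x1"
    "cJ (z - x2) \<bullet> x2 = omega z x2"
    by (simp_all add: omega_def[symmetric] omega_diff1 omega_self)
  have "omega x1 x2 = - omega x2 x1" by (rule omega_antisym)
  thus False using i1 i2 e1 by linarith
qed

lemma lin_cJ: "bounded_linear cJ"
proof -
  have "linear cJ" by (intro linearI) (simp_all add: cJ_add cJ_scaleR)
  thus ?thesis by (simp add: linear_conv_bounded_linear)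
qed

lemma PP_exists: assumes z: "z \<notin> X" shows "\<exists>x. PP z x"
proof -
  define F where "F c = am (cJ (z - c))" for c
  have nz: "cJ (z - c) \<noteq> 0" if "c \<in> X" for c
  proof
    assume "cJ (z - c) = 0" hence "z - c = 0" by (simp only: cJ_eq_0)
    hence "z = c" by simp
    with that z show False by simp
  qed
  have "continuous_on X (\<lambda>c. cJ (z - c))"
    by (rule bounded_linear.continuous_on[OF lin_cJ]) (intro continuous_intros)
  hence "continuous_on X F" unfolding F_def
    by (rule continuous_on_compose2[OF am_cont]) (use nz in auto)
  moreover have "F \<in> X \<rightarrow> X" unfolding F_def using am(1) nz by auto
  ultimately obtain c where c: "c \<in> X" "F c = c" using brouwer[OF cpt cvx Xne] by blast
  define q where "q = cJ (z - c)"
  have q: "q \<noteq> 0" "c = am q" using nz[OF c(1)] c(2) unfolding q_def F_def by auto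
  have cf: "c \<in> frontier X" using am_frontier[OF q(1)] q(2) by simp
  obtain \<nu> where nu: "\<nu> \<noteq> 0" "\<nu> \<bullet> c > 0" "\<forall>y\<in>X. \<nu> \<bullet> y \<le> \<nu> \<bullet> c"
      "tangent_space (frontier X) c = {v. \<nu> \<bullet> v = 0}"
    using frontier_normal[OF cf] by blast
  obtain l where l: "l > 0" "q = l *\<^sub>R \<nu>"
    using cone[OF cf nu(1,2,4) q(1)] am(2)[OF q(1)] q(2) by metis
  have zc: "z - c = (- l) *\<^sub>R cJ \<nu>"
  proof -
    have "z - c = - cJ q" unfolding q_def by (simp add: cJ_cJ)
    thus ?thesis unfolding l(2) cJ_scaleR by simp
  qed
  have "PP z c" unfolding PP_def
  proof (intro conjI)
    show "c \<in> frontier X" by fact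
    show "z \<noteq> c"
    proof
      assume "z = c" with z c(1) show False by simp
    qed
    show "omega c (c - z) > 0"
    proof -
      have "omega c (c - z) = omega (z - c) c" using omega_antisym[of c "z - c"] omega_diff2[of c c z]
        omega_diff1[of z c c] omega_self[of c] omega_antisym[of c z] by simp
      also have "\<dots> = q \<bullet> c" unfolding q_def omega_def ..
      also have "\<dots> > 0" using am_pos(2)[OF q(1)] q(2) by simp
      finally show ?thesis .
    qed
    show "{c + t *\<^sub>R (z - c) | t. True} = char_line X c"
      unfolding char_line_def char_dirs_eq[OF nu(1) nu(4)] zc
    proof (intro equalityI subsetI)
      fix y assume "y \<in> {c + t *\<^sub>R (- l *\<^sub>R cJ \<nu>) |t. True}"
      then obtain t where "y = c + t *\<^sub>R (- l *\<^sub>R cJ \<nu>)" by blast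
      hence "y = c + (- t * l) *\<^sub>R cJ \<nu>" by simp
      thus "y \<in> {c + u |u. u \<in> range (\<lambda>t. t *\<^sub>R cJ \<nu>)}" by blast
    next
      fix y assume "y \<in> {c + u |u. u \<in> range (\<lambda>t. t *\<^sub>R cJ \<nu>)}"
      then obtain s where "y = c + s *\<^sub>R cJ \<nu>" by blast
      hence "y = c + (- s / l) *\<^sub>R (- l *\<^sub>R cJ \<nu>)" using l(1) by simp
      thus "y \<in> {c + t *\<^sub>R (- l *\<^sub>R cJ \<nu>) |t. True}" by blast
    qed
  qed
  thus ?thesis by blast
qed

lemma ob_PP: assumes "z \<notin> X" shows "PP z (ob_point X z)"
proof -
  have "\<exists>!x. PP z x" using PP_exists[OF assms] PP_unique by blast
  hence "PP z (THE x. PP z x)" by (rule theI')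
  moreover have "ob_point X z = (THE x. PP z x)" unfolding ob_point_def PP_def ..
  ultimately show ?thesis by simp
qed

lemma ob_am: assumes "z \<notin> X" shows "ob_point X z = am (cJ (z - ob_point X z))"
  using PP_am(2)[OF ob_PP[OF assms]] .

lemma T_out: assumes z: "z \<notin> X" shows "outer_billiard X z \<notin> X"
proof
  define x where "x = ob_point X z"
  define q where "q = cJ (z - x)"
  have q: "q \<noteq> 0" "x = am q" using PP_am[OF ob_PP[OF z]] unfolding x_def q_def by auto
  have xX: "x \<in> X" using am(1)[OF q(1)] q(2) by simp
  assume "outer_billiard X z \<in> X"
  hence TX: "2 *\<^sub>R x - z \<in> X" unfolding outer_billiard_def x_def .
  have "q \<bullet> (z - x) = 0" unfolding q_def by (rule cJ_self)
  hence "q \<bullet> (2 *\<^sub>R x - z) = q \<bullet> x" by (simp add: inner_diff_right algebra_simps)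
  moreover have "2 *\<^sub>R x - z \<noteq> x"
  proof
    assume "2 *\<^sub>R x - z = x"
    hence "z = x" by (simp add: scaleR_2 algebra_simps)
    with z xX show False by simp
  qed
  ultimately show False using am_strict[OF q(1) TX] q(2) by simp
qed

end



lemma aux1: fixes b x z :: "'a::real_vector" assumes "- z = 2 *\<^sub>R b - (2 *\<^sub>R x - z)" shows "b = x - z"
proof -
  have "2 *\<^sub>R b = 2 *\<^sub>R (x - z)" using assms by (simp add: algebra_simps scaleR_2)
  thus ?thesis by simp
qed
lemma aux2: fixes a z :: "'a::real_vector" shows "(1/2) *\<^sub>R (z + (2 *\<^sub>R a - z)) = a"
  by simp
lemma aux3: fixes x z :: "'a::real_vector" shows "(2 *\<^sub>R x - z) - (x - z) = x"
  by (simp add: algebra_simps scaleR_2)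

locale cbody2 = cbody1 +
  assumes hyp: "\<forall>x\<in>frontier X. \<exists>z. z \<notin> X \<and> (outer_billiard X ^^ 2) z = - z \<and>
                  x = (1/2) *\<^sub>R (z + outer_billiard X z)"
begin

definition S where "S x = am (cJ x)"
definition H where "H x = omega x (S x)"

lemma S_max: "x \<noteq> 0 \<Longrightarrow> y \<in> X \<Longrightarrow> omega x y \<le> H x"
  unfolding H_def S_def omega_def using am(2) cJ_eq_0 by blast

lemma S_in: "x \<noteq> 0 \<Longrightarrow> S x \<in> X"
  unfolding S_def using am(1) cJ_eq_0 by blast

lemma H_pos: "x \<noteq> 0 \<Longrightarrow> H x > 0"
  unfolding H_def S_def omega_def using am_pos(2) cJ_eq_0 by blast

lemma pair: assumes x: "x \<in> frontier X" shows "\<forall>y\<in>X. omega y (S x) \<le> H x"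
proof -
  obtain z where z: "z \<notin> X" "(outer_billiard X ^^ 2) z = - z" "x = (1/2) *\<^sub>R (z + outer_billiard X z)"
    using hyp x by blast
  define a where "a = ob_point X z"
  have Tz: "outer_billiard X z = 2 *\<^sub>R a - z" unfolding outer_billiard_def a_def ..
  have xa: "x = a" using z(3) unfolding Tz aux2 .
  have TzX: "outer_billiard X z \<notin> X" using T_out[OF z(1)] .
  define b where "b = ob_point X (outer_billiard X z)"
  have "- z = outer_billiard X (outer_billiard X z)" using z(2) by (simp add: numeral_2_eq_2)
  also have "\<dots> = 2 *\<^sub>R b - (2 *\<^sub>R x - z)" unfolding outer_billiard_def[of X "outer_billiard X z"] b_def[symmetric]
    unfolding Tz xa ..
  finally have bx: "b = x - z" by (rule aux1)
  have "b = am (cJ (outer_billiard X z - b))" using ob_am[OF TzX] unfolding b_def .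
  moreover have Tb: "outer_billiard X z - b = x" unfolding Tz bx xa[symmetric] by (rule aux3)
  ultimately have "b = am (cJ x)" by simp
  hence Sx: "S x = x - z" unfolding S_def using bx by simp
  have "a = am (cJ (z - a))" using ob_am[OF z(1)] unfolding a_def .
  hence xz: "x = am (cJ (z - x))" using xa by simp
  have mS: "- S x = z - x" using Sx by simp
  have xam: "x = am (cJ (- S x))" unfolding mS by (rule xz)
  have nz: "cJ (- S x) \<noteq> 0" using PP_am(1)[OF ob_PP[OF z(1)]] unfolding a_def[symmetric] xa[symmetric] mS .
  show ?thesis
  proof
    fix y assume "y \<in> X"
    from am(2)[OF nz this] xam have "cJ (- S x) \<bullet> y \<le> cJ (- S x) \<bullet> x" by simp
    moreover have "cJ (- S x) \<bullet> y = omega y (S x)" for y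
      using omega_antisym[of "S x" y] by (simp add: omega_def cJ_minus)
    ultimately show "omega y (S x) \<le> H x" unfolding H_def by (metis omega_antisym)
  qed
qed

lemma H_est: assumes a: "a \<in> frontier X" and b: "b \<in> frontier X"
  shows "\<bar>H a - H b\<bar> \<le> norm (a - b) * norm (S a - S b)"
proof -
  have a0: "a \<noteq> 0" and b0: "b \<noteq> 0" using a b frontier_nz by auto
  have aX: "a \<in> X" and bX: "b \<in> X" using a b frontier_sub by auto
  define w where "w = omega (b - a) (S b - S a)"
  have expand: "omega b (S b) = omega b (S a) + omega a (S b) - omega a (S a) + w"
    unfolding w_def by (simp add: omega_diff1 omega_diff2)
  have expand2: "omega a (S a) = omega a (S b) + omega b (S a) - omega b (S b) + w"
    unfolding w_def by (simp add: omega_diff1 omega_diff2)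
  have i1: "omega b (S a) \<le> H a" using pair[OF a] bX by blast
  have i2: "omega a (S b) \<le> H a" using S_max[OF a0 S_in[OF b0]] .
  have i3: "omega a (S b) \<le> H b" using pair[OF b] aX by blast
  have i4: "omega b (S a) \<le> H b" using S_max[OF b0 S_in[OF a0]] .
  have "H b \<le> H a + w" using expand i1 i2 unfolding H_def by linarith
  moreover have "H a \<le> H b + w" using expand2 i3 i4 unfolding H_def by linarith
  moreover have "\<bar>w\<bar> \<le> norm (a - b) * norm (S a - S b)"
    unfolding w_def using omega_bound[of "b - a" "S b - S a"] by (simp add: norm_minus_commute)
  ultimately show ?thesis by linarith
qed

lemma S_cont: "continuous_on (- {0}) S"
proof -
  have "continuous_on (- {0}) cJ" by (rule linear_continuous_on[OF lin_cJ])
  moreover have "cJ ` (- {0}) \<subseteq> - {0}"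
  proof
    fix y assume "y \<in> cJ ` (- {0})"
    then obtain u where u: "u \<noteq> 0" "y = cJ u" by blast
    hence "y \<noteq> 0" by (simp only: cJ_eq_0 simp_thms)
    thus "y \<in> - {0}" by simp
  qed
  ultimately have "continuous_on (- {0}) (\<lambda>x. am (cJ x))"
    by (rule continuous_on_compose2[OF am_cont])
  thus ?thesis unfolding S_def[abs_def] .
qed

end



lemma proj_lip:
  fixes a b :: "'a::real_normed_vector"
  assumes m: "m > 0" "ma \<ge> m" "mb \<ge> m" and K: "K \<ge> 0" "\<bar>ma - mb\<bar> \<le> K * norm (a - b)"
    and M: "norm b \<le> M"
  shows "norm ((1/ma) *\<^sub>R a - (1/mb) *\<^sub>R b) \<le> (1/m + M * K / (m*m)) * norm (a - b)"
proof -
  have ma: "ma > 0" and mb: "mb > 0" using m by auto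
  have eq: "(1/ma) *\<^sub>R a - (1/mb) *\<^sub>R b = (1/ma) *\<^sub>R (a - b) + (1/ma - 1/mb) *\<^sub>R b"
    by (simp add: algebra_simps)
  have "norm ((1/ma) *\<^sub>R a - (1/mb) *\<^sub>R b) \<le> norm ((1/ma) *\<^sub>R (a - b)) + norm ((1/ma - 1/mb) *\<^sub>R b)"
    unfolding eq by (rule norm_triangle_ineq)
  also have "norm ((1/ma) *\<^sub>R (a - b)) = (1/ma) * norm (a - b)" using ma by simp
  also have "(1/ma) * norm (a - b) \<le> (1/m) * norm (a - b)"
    using m ma by (intro mult_right_mono) (auto simp: field_simps)
  also have "norm ((1/ma - 1/mb) *\<^sub>R b) = \<bar>1/ma - 1/mb\<bar> * norm b" by simp
  also have "\<bar>1/ma - 1/mb\<bar> = \<bar>ma - mb\<bar> / (ma * mb)" using ma mb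
    by (simp add: field_simps abs_minus_commute)
  also have "\<bar>ma - mb\<bar> / (ma * mb) * norm b \<le> (K * norm (a - b)) / (m * m) * M"
  proof (rule mult_mono)
    show "\<bar>ma - mb\<bar> / (ma * mb) \<le> (K * norm (a - b)) / (m * m)"
    proof (rule frac_le)
      show "0 \<le> K * norm (a - b)" using K by simp
      show "\<bar>ma - mb\<bar> \<le> K * norm (a - b)" by (rule K(2))
      show "0 < m * m" using m by simp
      show "m * m \<le> ma * mb" using m by (intro mult_mono) auto
    qed
  qed (use M K m in auto)
  finally show ?thesis by (simp add: field_simps)
qed

lemma seg_diff: fixes u w :: "'a::real_vector"
  shows "((1 - s) *\<^sub>R u + s *\<^sub>R w) - ((1 - t) *\<^sub>R u + t *\<^sub>R w) = (s - t) *\<^sub>R (w - u)"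
  by (simp add: algebra_simps)

context cbody2 begin

lemma path_const:
  assumes seg: "0 \<notin> closed_segment u w"
  shows "H ((1 / mu u) *\<^sub>R u) = H ((1 / mu w) *\<^sub>R w)"
proof -
  define \<sigma> where "\<sigma> t = (1 - t) *\<^sub>R u + t *\<^sub>R w" for t
  have sin: "\<sigma> t \<in> closed_segment u w" if "t \<in> {0..1}" for t
    using that unfolding \<sigma>_def closed_segment_def by auto
  have snz: "\<sigma> t \<noteq> 0" if "t \<in> {0..1}" for t using sin[OF that] seg by metis
  obtain y0 where y0: "y0 \<in> closed_segment u w" "\<forall>y\<in>closed_segment u w. norm y0 \<le> norm y"
    using continuous_attains_inf[OF compact_segment[of u w], of norm] by (auto intro: continuous_intros)
  define m where "m = norm y0 / RR"
  have m: "m > 0" using y0(1) seg RR(1) unfolding m_def by (metis divide_pos_pos zero_less_norm_iff)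
  have mus: "mu (\<sigma> t) \<ge> m" if "t \<in> {0..1}" for t
  proof -
    have "m \<le> norm (\<sigma> t) / RR" unfolding m_def using y0(2) sin[OF that] RR(1)
      by (simp add: divide_right_mono)
    thus ?thesis using mu_lower[of "\<sigma> t"] by linarith
  qed
  define M where "M = norm u + norm w"
  have Ms: "norm (\<sigma> t) \<le> M" if "t \<in> {0..1}" for t
  proof -
    have "norm (\<sigma> t) \<le> norm ((1 - t) *\<^sub>R u) + norm (t *\<^sub>R w)" unfolding \<sigma>_def by (rule norm_triangle_ineq)
    also have "\<dots> = (1 - t) * norm u + t * norm w" using that by simp
    also have "\<dots> \<le> norm u + norm w" using that by (intro add_mono mult_left_le_one_le) auto
    finally show ?thesis unfolding M_def .
  qed
  define p where "p t = (1 / mu (\<sigma> t)) *\<^sub>R \<sigma> t" for t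
  have pF: "p t \<in> frontier X" if "t \<in> {0..1}" for t unfolding p_def using proj_frontier[OF snz[OF that]] .
  define C where "C = 1/m + M * (1/rho) / (m*m)"
  have C: "C \<ge> 0" unfolding C_def using m rho(1) M_def by simp
  define L where "L = C * norm (w - u)"
  have L: "L \<ge> 0" unfolding L_def using C by simp
  have plip: "norm (p s - p t) \<le> L * \<bar>s - t\<bar>" if st: "s \<in> {0..1}" "t \<in> {0..1}" for s t
  proof -
    have "norm (p s - p t) \<le> C * norm (\<sigma> s - \<sigma> t)"
      unfolding p_def C_def
    proof (rule proj_lip)
      show "0 < m" by (rule m)
      show "m \<le> mu (\<sigma> s)" by (rule mus[OF st(1)])
      show "m \<le> mu (\<sigma> t)" by (rule mus[OF st(2)])
      show "0 \<le> 1 / rho" using rho(1) by simp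
      show "\<bar>mu (\<sigma> s) - mu (\<sigma> t)\<bar> \<le> 1 / rho * norm (\<sigma> s - \<sigma> t)" using mu_lip_abs by simp
      show "norm (\<sigma> t) \<le> M" by (rule Ms[OF st(2)])
    qed
    also have "norm (\<sigma> s - \<sigma> t) = \<bar>s - t\<bar> * norm (w - u)" unfolding \<sigma>_def seg_diff by simp
    finally show ?thesis unfolding L_def by (simp add: mult_ac)
  qed
  define \<psi> where "\<psi> t = H (p t)" for t
  have deriv: "(\<psi> has_derivative (\<lambda>h. 0)) (at t within {0..1})" if t: "t \<in> {0..1}" for t
    unfolding has_derivative_within_alt
  proof (intro conjI allI impI bounded_linear_zero)
    fix e :: real assume e: "e > 0"
    have "p t \<in> - {0}" using pF[OF t] frontier_nz by auto
    hence "isCont S (p t)" using S_cont continuous_on_eq_continuous_at[of "- {0}" S] by blast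
    moreover have "e / (L + 1) > 0" using e L by simp
    ultimately obtain d1 where d1: "d1 > 0" "\<forall>x'. dist x' (p t) < d1 \<longrightarrow> dist (S x') (S (p t)) < e / (L + 1)"
      unfolding continuous_at_eps_delta by blast
    show "\<exists>d>0. \<forall>s\<in>{0..1}. norm (s - t) < d \<longrightarrow> norm (\<psi> s - \<psi> t - 0) \<le> e * norm (s - t)"
    proof (intro exI[of _ "d1 / (L + 1)"] conjI ballI impI)
      show "d1 / (L + 1) > 0" using d1(1) L by simp
      fix s assume s: "s \<in> {0..1}" and sd: "norm (s - t) < d1 / (L + 1)"
      have n1: "norm (p s - p t) \<le> L * \<bar>s - t\<bar>" by (rule plip[OF s t])
      have "L * \<bar>s - t\<bar> \<le> L * (d1 / (L + 1))" using sd L by (intro mult_left_mono) auto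
      also have "\<dots> < d1" using L d1(1) by (simp add: field_simps)
      finally have "dist (p s) (p t) < d1" using n1 by (simp add: dist_norm)
      hence n2: "norm (S (p s) - S (p t)) \<le> e / (L + 1)" using d1(2) by (simp add: dist_norm less_imp_le)
      have "\<bar>\<psi> s - \<psi> t\<bar> \<le> norm (p s - p t) * norm (S (p s) - S (p t))"
        unfolding \<psi>_def by (rule H_est[OF pF[OF s] pF[OF t]])
      also have "\<dots> \<le> (L * \<bar>s - t\<bar>) * (e / (L + 1))"
        using n1 n2 L by (intro mult_mono) auto
      also have "\<dots> \<le> e * \<bar>s - t\<bar>"
      proof -
        have "L / (L + 1) \<le> 1" using L by simp
        hence "(L * \<bar>s - t\<bar>) * (e / (L + 1)) = (L / (L + 1)) * (e * \<bar>s - t\<bar>)" by (simp add: field_simps)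
        also have "\<dots> \<le> 1 * (e * \<bar>s - t\<bar>)" using \<open>L / (L + 1) \<le> 1\<close> e
          by (intro mult_right_mono) auto
        finally show ?thesis by simp
      qed
      finally show "norm (\<psi> s - \<psi> t - 0) \<le> e * norm (s - t)" by simp
    qed
  qed
  obtain c where "\<forall>x\<in>{0..1::real}. \<psi> x = c"
    using has_derivative_zero_constant[OF convex_real_interval(5) deriv] by blast
  hence "\<psi> 0 = \<psi> 1" by simp
  thus ?thesis unfolding \<psi>_def p_def \<sigma>_def by simp
qed

end



lemma scale_image: "(\<lambda>y. a *\<^sub>R y) ` ((\<lambda>y. b *\<^sub>R y) ` A) = (\<lambda>y. (a * b) *\<^sub>R y) ` (A :: 'a::real_vector set)"
  by (simp add: image_image)

lemma polar_scale:
  fixes X :: "(complex ^ 'n) set"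
  assumes c: "c > 0"
  shows "symp_polar ((\<lambda>y. c *\<^sub>R y) ` X) = (\<lambda>y. (1/c) *\<^sub>R y) ` symp_polar X"
proof (intro equalityI subsetI)
  fix y assume "y \<in> symp_polar ((\<lambda>y. c *\<^sub>R y) ` X)"
  hence "\<forall>x\<in>X. omega (c *\<^sub>R x) y \<le> 1" unfolding symp_polar_def by auto
  hence "\<forall>x\<in>X. omega x (c *\<^sub>R y) \<le> 1" by (simp add: omega_scale1 omega_scale2)
  hence "c *\<^sub>R y \<in> symp_polar X" unfolding symp_polar_def by auto
  moreover have "y = (1/c) *\<^sub>R (c *\<^sub>R y)" using c by simp
  ultimately show "y \<in> (\<lambda>y. (1/c) *\<^sub>R y) ` symp_polar X" by blast
next
  fix y assume "y \<in> (\<lambda>y. (1/c) *\<^sub>R y) ` symp_polar X"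
  then obtain v where v: "v \<in> symp_polar X" "y = (1/c) *\<^sub>R v" by blast
  have "omega x' y \<le> 1" if "x' \<in> (\<lambda>y. c *\<^sub>R y) ` X" for x'
  proof -
    obtain x where x: "x \<in> X" "x' = c *\<^sub>R x" using \<open>x' \<in> _\<close> by blast
    have "omega x' y = omega x v" unfolding x v using c by (simp add: omega_scale1 omega_scale2)
    also have "\<dots> \<le> 1" using v(1) x(1) unfolding symp_polar_def by blast
    finally show ?thesis .
  qed
  thus "y \<in> symp_polar ((\<lambda>y. c *\<^sub>R y) ` X)" unfolding symp_polar_def by blast
qed

context cbody2 begin

lemma H_const: assumes a: "a \<in> frontier X" and b: "b \<in> frontier X" shows "H a = H b"
proof -
  have ida: "(1 / mu a) *\<^sub>R a = a" and idb: "(1 / mu b) *\<^sub>R b = b" using frontier_proj_id a b by auto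
  have a0: "a \<noteq> 0" and b0: "b \<noteq> 0" using a b frontier_nz by auto
  show ?thesis
  proof (cases "0 \<in> closed_segment a b")
    case False
    from path_const[OF this] show ?thesis unfolding ida idb .
  next
    case True
    then obtain s where s: "0 \<le> s" "s \<le> 1" "0 = (1 - s) *\<^sub>R a + s *\<^sub>R b"
      unfolding closed_segment_def by blast
    have aJ: "a \<bullet> cJ a = 0" using cJ_self[of a] by (simp add: inner_commute)
    have "0 = ((1 - s) *\<^sub>R a + s *\<^sub>R b) \<bullet> cJ a" using s(3) by simp
    hence "s * (b \<bullet> cJ a) = 0" using aJ by (simp add: inner_add_left)
    moreover have "s \<noteq> 0" using s(3) a0 by auto
    ultimately have bJ: "b \<bullet> cJ a = 0" by simp
    have J0: "cJ a \<noteq> 0" using a0 cJ_eq_0 by blast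
    have seg1: "0 \<notin> closed_segment a (cJ a)"
    proof
      assume "0 \<in> closed_segment a (cJ a)"
      then obtain t where t: "0 \<le> t" "t \<le> 1" "0 = (1 - t) *\<^sub>R a + t *\<^sub>R cJ a"
        unfolding closed_segment_def by blast
      have "0 = ((1 - t) *\<^sub>R a + t *\<^sub>R cJ a) \<bullet> a" using t(3) by simp
      hence "(1 - t) * (a \<bullet> a) = 0" using cJ_self[of a] by (simp add: inner_add_left)
      hence "t = 1" using a0 by simp
      thus False using t(3) J0 by simp
    qed
    have seg2: "0 \<notin> closed_segment (cJ a) b"
    proof
      assume "0 \<in> closed_segment (cJ a) b"
      then obtain t where t: "0 \<le> t" "t \<le> 1" "0 = (1 - t) *\<^sub>R cJ a + t *\<^sub>R b"
        unfolding closed_segment_def by blast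
      have "0 = ((1 - t) *\<^sub>R cJ a + t *\<^sub>R b) \<bullet> cJ a" using t(3) by simp
      hence "(1 - t) * (cJ a \<bullet> cJ a) = 0" using bJ by (simp add: inner_add_left)
      hence "t = 1" using J0 by simp
      thus False using t(3) b0 by simp
    qed
    have "H a = H ((1 / mu (cJ a)) *\<^sub>R cJ a)" using path_const[OF seg1] unfolding ida .
    also have "\<dots> = H b" using path_const[OF seg2] unfolding idb .
    finally show ?thesis .
  qed
qed

lemma omega_zero1: "omega 0 y = 0" by (simp add: omega_def cJ_0)

lemma main: "\<exists>\<alpha>>0. X = (\<lambda>y. \<alpha> *\<^sub>R y) ` symp_polar X \<and>
           symp_self_polar ((\<lambda>y. (1 / sqrt \<alpha>) *\<^sub>R y) ` X)"
proof -
  have "(1 / mu 1) *\<^sub>R 1 \<in> frontier X" by (rule proj_frontier) simp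
  then obtain x0 where x0: "x0 \<in> frontier X" by blast
  define \<alpha> where "\<alpha> = H x0"
  have apos: "\<alpha> > 0" unfolding \<alpha>_def using H_pos frontier_nz x0 by blast
  have Hc: "H x = \<alpha>" if "x \<in> frontier X" for x unfolding \<alpha>_def using H_const[OF that x0] .
  have eqX: "X = (\<lambda>y. \<alpha> *\<^sub>R y) ` symp_polar X"
  proof (intro equalityI subsetI)
    fix x assume xX: "x \<in> X"
    have "omega x' ((1/\<alpha>) *\<^sub>R x) \<le> 1" if x': "x' \<in> X" for x'
    proof (cases "x' = 0")
      case True thus ?thesis using apos by (simp add: omega_zero1)
    next
      case False
      define xh where "xh = (1 / mu x') *\<^sub>R x'"
      have xh: "xh \<in> frontier X" unfolding xh_def by (rule proj_frontier[OF False])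
      have mp: "mu x' > 0" using mu_pos[OF False] .
      have "x' = mu x' *\<^sub>R xh" unfolding xh_def using mp by simp
      hence "omega x' x = mu x' * omega xh x" by (metis omega_scale1)
      also have "\<dots> \<le> mu x' * \<alpha>"
        using S_max[OF frontier_nz[OF xh] xX] Hc[OF xh] mp by (intro mult_left_mono) auto
      also have "\<dots> \<le> 1 * \<alpha>" using in_X_iff x' apos by (intro mult_right_mono) auto
      finally have "omega x' x \<le> \<alpha>" by simp
      thus ?thesis using apos by (simp add: omega_scale2 field_simps)
    qed
    hence "(1/\<alpha>) *\<^sub>R x \<in> symp_polar X" unfolding symp_polar_def by blast
    moreover have "x = \<alpha> *\<^sub>R ((1/\<alpha>) *\<^sub>R x)" using apos by simp
    ultimately show "x \<in> (\<lambda>y. \<alpha> *\<^sub>R y) ` symp_polar X" by blast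
  next
    fix v assume "v \<in> (\<lambda>y. \<alpha> *\<^sub>R y) ` symp_polar X"
    then obtain y where y: "y \<in> symp_polar X" "v = \<alpha> *\<^sub>R y" by blast
    show "v \<in> X"
    proof (rule ccontr)
      assume vX: "v \<notin> X"
      hence mv: "mu v > 1" using in_X_iff by simp
      have v0: "v \<noteq> 0" using vX zX by blast
      define vh where "vh = (1 / mu v) *\<^sub>R v"
      have vh: "vh \<in> frontier X" unfolding vh_def by (rule proj_frontier[OF v0])
      have vh0: "vh \<noteq> 0" using frontier_nz[OF vh] .
      have xin: "- S vh \<in> X" using symm S_in[OF vh0] by blast
      have "(mu v / \<alpha>) *\<^sub>R vh = ((mu v / \<alpha>) * (1 / mu v) * \<alpha>) *\<^sub>R y"
        unfolding vh_def y(2) by simp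
      moreover have "(mu v / \<alpha>) * (1 / mu v) * \<alpha> = 1" using apos mv by simp
      ultimately have "y = (mu v / \<alpha>) *\<^sub>R vh" by simp
      hence "omega (- S vh) y = (mu v / \<alpha>) * omega vh (S vh)"
        by (metis omega_minus1 omega_antisym omega_scale1 minus_minus)
      also have "\<dots> = mu v" using Hc[OF vh] apos unfolding H_def by simp
      finally have "omega (- S vh) y > 1" using mv by simp
      moreover have "omega (- S vh) y \<le> 1" using y(1) xin unfolding symp_polar_def by blast
      ultimately show False by simp
    qed
  qed
  have pol: "symp_polar X = (\<lambda>y. (1/\<alpha>) *\<^sub>R y) ` X"
  proof -
    have "(\<lambda>y. (1/\<alpha>) *\<^sub>R y) ` X = (\<lambda>y. (1/\<alpha>) *\<^sub>R y) ` ((\<lambda>y. \<alpha> *\<^sub>R y) ` symp_polar X)"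
      using eqX by (rule arg_cong)
    also have "\<dots> = (\<lambda>y. ((1/\<alpha>) * \<alpha>) *\<^sub>R y) ` symp_polar X" by (rule scale_image)
    also have "\<dots> = symp_polar X" using apos by simp
    finally show ?thesis by simp
  qed
  have sa: "sqrt \<alpha> > 0" using apos by simp
  have "symp_polar ((\<lambda>y. (1 / sqrt \<alpha>) *\<^sub>R y) ` X) = (\<lambda>y. (1 / (1 / sqrt \<alpha>)) *\<^sub>R y) ` symp_polar X"
    using polar_scale[of "1 / sqrt \<alpha>" X] sa by simp
  also have "\<dots> = (\<lambda>y. (sqrt \<alpha> * (1/\<alpha>)) *\<^sub>R y) ` X" unfolding pol scale_image by simp
  also have "sqrt \<alpha> * (1/\<alpha>) = 1 / sqrt \<alpha>"
  proof -
    have a: "sqrt \<alpha> * sqrt \<alpha> = \<alpha>" using apos by simp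
    have "sqrt \<alpha> * (1/\<alpha>) = sqrt \<alpha> / (sqrt \<alpha> * sqrt \<alpha>)" unfolding a by simp
    also have "\<dots> = 1 / sqrt \<alpha>" using sa by (intro nonzero_divide_mult_cancel_left) simp
    finally show ?thesis .
  qed
  finally have "symp_self_polar ((\<lambda>y. (1 / sqrt \<alpha>) *\<^sub>R y) ` X)" unfolding symp_self_polar_def by simp
  with eqX apos show ?thesis by blast
qed

end


theorem theorem3p2:
  fixes X :: "(complex ^ 'n) set"
  assumes "convex_body X" and "centrally_symmetric X" and "strictly_convex X"
    and "C2_boundary X"
    and "\<forall>x\<in>frontier X. \<exists>z. z \<notin> X \<and>
            (outer_billiard X ^^ 4) z = z \<and> (outer_billiard X ^^ 2) z = - z \<and>
            x = (1/2) *\<^sub>R (z + outer_billiard X z)"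
  shows "\<exists>\<alpha>>0. X = (\<lambda>y. \<alpha> *\<^sub>R y) ` symp_polar X \<and>
           symp_self_polar ((\<lambda>y. (1 / sqrt \<alpha>) *\<^sub>R y) ` X)"
proof -
  have cb: "compact X" "convex X" "interior X \<noteq> {}" using assms(1) unfolding convex_body_def by auto
  have sym: "\<And>x. x \<in> X \<Longrightarrow> - x \<in> X" using assms(2) unfolding centrally_symmetric_def by blast
  have zi: "0 \<in> interior X"
  proof -
    obtain p where p: "p \<in> interior X" using cb(3) by blast
    then obtain e where e: "e > 0" "ball p e \<subseteq> X" by (meson mem_interior)
    have "ball (- p) e \<subseteq> X"
    proof
      fix y assume "y \<in> ball (- p) e"
      hence "dist p (- y) < e" by (simp add: dist_norm norm_minus_commute add.commute)
      hence "- y \<in> X" using e(2) by auto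
      hence "- (- y) \<in> X" by (rule sym)
      thus "y \<in> X" by simp
    qed
    hence "ball (- p) e \<subseteq> interior X" by (rule interior_maximal) simp
    moreover have "- p \<in> ball (- p) e" using e(1) by simp
    ultimately have mp: "- p \<in> interior X" by blast
    have "convex (interior X)" using cb(2) by (rule convex_interior)
    from convexD[OF this p mp, of "1/2" "1/2"] show ?thesis by simp
  qed
  have C1: "\<forall>p\<in>frontier X. \<exists>U f g. open U \<and> p \<in> U \<and>
        (\<forall>x\<in>U. (f has_derivative (\<lambda>h. g x \<bullet> h)) (at x)) \<and> g p \<noteq> 0 \<and>
        X \<inter> U = {x\<in>U. f x \<le> (0::real)}"
  proof
    fix p assume pf: "p \<in> frontier X"
    have "\<exists>U f g g'. open U \<and> p \<in> U \<and>
        (\<forall>x\<in>U. (f has_derivative (\<lambda>h. g x \<bullet> h)) (at x)) \<and>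
        (\<forall>x\<in>U. (g has_derivative g' x) (at x)) \<and>
        (\<forall>h. continuous_on U (\<lambda>x. g' x h)) \<and>
        g p \<noteq> 0 \<and>
        X \<inter> U = {x\<in>U. f x \<le> (0::real)}"
      using assms(4)[unfolded C2_boundary_def] pf by (rule bspec)
    then obtain U f g g' where all: "open U \<and> p \<in> U \<and>
        (\<forall>x\<in>U. (f has_derivative (\<lambda>h. g x \<bullet> h)) (at x)) \<and>
        (\<forall>x\<in>U. (g has_derivative g' x) (at x)) \<and>
        (\<forall>h. continuous_on U (\<lambda>x. g' x h)) \<and>
        g p \<noteq> 0 \<and>
        X \<inter> U = {x\<in>U. f x \<le> (0::real)}" by (elim exE)
    hence "open U \<and> p \<in> U \<and>
        (\<forall>x\<in>U. (f has_derivative (\<lambda>h. g x \<bullet> h)) (at x)) \<and> g p \<noteq> 0 \<and>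
        X \<inter> U = {x\<in>U. f x \<le> (0::real)}" by (elim conjE) (intro conjI)
    thus "\<exists>U f g. open U \<and> p \<in> U \<and>
        (\<forall>x\<in>U. (f has_derivative (\<lambda>h. g x \<bullet> h)) (at x)) \<and> g p \<noteq> 0 \<and>
        X \<inter> U = {x\<in>U. f x \<le> (0::real)}" by (intro exI)
  qed
  have hyp: "\<forall>x\<in>frontier X. \<exists>z. z \<notin> X \<and> (outer_billiard X ^^ 2) z = - z \<and>
                  x = (1/2) *\<^sub>R (z + outer_billiard X z)"
  proof
    fix x assume "x \<in> frontier X"
    then obtain z where "z \<notin> X" "(outer_billiard X ^^ 2) z = - z"
        "x = (1/2) *\<^sub>R (z + outer_billiard X z)" using assms(5) by blast
    thus "\<exists>z. z \<notin> X \<and> (outer_billiard X ^^ 2) z = - z \<and> x = (1/2) *\<^sub>R (z + outer_billiard X z)" by blast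
  qed
  have "cbody2 X"
    unfolding cbody2_def cbody1_def cbody_def cbody1_axioms_def cbody2_axioms_def
    using cb(1,2) zi sym assms(3) C1 hyp by blast
  from cbody2.main[OF this] show ?thesis .
qed

end
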